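(* Let $\mathcal{C}$ be an Additive-CSP($\psi$) instance with $\mathrm{val}(\mathcal{C})\ge 1-\epsilon$. Then $\mathrm{GI}(G_{\mathcal{C}},G_{\mathcal{C}^0})\ge 1-\epsilon$.
   Context: $H$ is a finite abelian group, $k\ge3$, $\psi\subseteq H^k$ a balanced pairwise independent subgroup (proper subgroup of $H^k$; for $a$ uniform in $\psi$ each coordinate uniform on $H$, any two coordinates independent). An instance $\mathcal{C}=(C_1,\dots,C_m)$ on variables $x_1,\dots,x_n$ over $H$ has constraints $\psi(x_{j_1}+a_1,\dots,x_{j_k}+a_k)=1$ on distinct variables, $a_i\in H$; $\mathcal{C}^0$ sets all $a_i=0$; $\mathrm{val}(\mathcal{C})$ is the maximum fraction of constraints satisfied by an assignment. Variable gadget $\Gamma_x$ for a variable $x$: fix $H=\mathbb{Z}_{p_1}\oplus\dots\oplus\mathbb{Z}_{p_t}$ with $p_i\ge2$; vertices $x\mapsto b$ for $b\in H$. An $i$-row is a set of $p_i$ elements of $H$ agreeing in all coordinates except the $i$-th. Row part (only if $t>1$): for every $i$ and every $i$-row $R$, add a new vertex $w_R$ adjacent to all $x\mapsto b$, $b\in R$, and $i$ new vertices each adjacent only to $w_R$. Cycle part: for every $i$ and $i$-row $R$: if $p_i=2$ add an edge between its two vertices; if $p_i\ge3$, write $R=\{r_0,\dots,r_{p_i-1}\}$ with $r_j$ having $i$-th coordinate $j$, and for each $j\in\mathbb{Z}_{p_i}$ add the edge $\{x\mapsto r_j,x\mapsto r_{j+1}\}$ and two new vertices $u,v$ with edges $\{u,x\mapsto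 r_j\},\{u,x\mapsto r_{j+1}\},\{u,v\},\{v,x\mapsto r_{j+1}\}$. Graph $G_{\mathcal{C}}$: one copy of $\Gamma_{x_j}$ for each variable $x_j$; for each constraint $C_i$ on $(x_{j_1},\dots,x_{j_k})$, a set of constraint vertices, one per assignment $\alpha$ to these variables satisfying $C_i$ (distinct constraints have distinct constraint vertices), forming a clique, with each $\alpha$ adjacent to $x_{j_l}\mapsto\alpha(x_{j_l})$ for $l\in[k]$. $\mathrm{GI}(G,G')=\max_\pi\frac{|\{e\in E(G):\pi(e)\in E(G')\}|}{\max\{|E(G)|,|E(G')|\}}$ over bijections $\pi$. *)

theory Defs
  imports Complex_Main "HOL-Library.FuncSet"
begin

text \<open>H is represented concretely by the list ps = [p_0,...,p_{t-1}]; an element of H is a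
list h of length t with h!i < p_i. Coordinates are 0-indexed.\<close>

definition Hset :: "nat list \<Rightarrow> nat list set" where
  "Hset ps = {h. length h = length ps \<and> (\<forall>i<length ps. h ! i < ps ! i)}"

definition hadd :: "nat list \<Rightarrow> nat list \<Rightarrow> nat list \<Rightarrow> nat list" where
  "hadd ps h g = map (\<lambda>i. (h ! i + g ! i) mod ps ! i) [0..<length ps]"

definition hzero :: "nat list \<Rightarrow> nat list" where
  "hzero ps = replicate (length ps) 0"

definition hneg :: "nat list \<Rightarrow> nat list \<Rightarrow> nat list" where
  "hneg ps h = map (\<lambda>i. (ps ! i - h ! i) mod ps ! i) [0..<length ps]"

definition Hpow :: "nat list \<Rightarrow> nat \<Rightarrow> nat list list set" where
  "Hpow ps k = {a. length a = k \<and> set a \<subseteq> Hset ps}"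

definition tadd :: "nat list \<Rightarrow> nat list list \<Rightarrow> nat list list \<Rightarrow> nat list list" where
  "tadd ps a b = map2 (hadd ps) a b"

text \<open>psi is a proper subgroup of H^k which is balanced pairwise independent: for a uniform
in psi, each coordinate is uniform on H and any two coordinates are independent.\<close>

definition bpi_subgroup :: "nat list \<Rightarrow> nat \<Rightarrow> nat list list set \<Rightarrow> bool" where
  "bpi_subgroup ps k \<psi> \<longleftrightarrow>
     \<psi> \<subseteq> Hpow ps k \<and>
     replicate k (hzero ps) \<in> \<psi> \<and>
     (\<forall>a\<in>\<psi>. \<forall>b\<in>\<psi>. tadd ps a b \<in> \<psi>) \<and>
     (\<forall>a\<in>\<psi>. map (hneg ps) a \<in> \<psi>) \<and>
     \<psi> \<noteq> Hpow ps k \<and>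
     (\<forall>i<k. \<forall>h\<in>Hset ps. card {a\<in>\<psi>. a ! i = h} * card (Hset ps) = card \<psi>) \<and>
     (\<forall>i<k. \<forall>j<k. i \<noteq> j \<longrightarrow> (\<forall>h\<in>Hset ps. \<forall>g\<in>Hset ps.
         card {a\<in>\<psi>. a ! i = h \<and> a ! j = g} * (card (Hset ps))\<^sup>2 = card \<psi>))"

text \<open>A constraint is a pair (js, as): the variables x_{js!0},...,x_{js!(k-1)} (distinct)
and the shifts as!0,...,as!(k-1) in H.\<close>

type_synonym constr = "nat list \<times> nat list list"

definition instance_wf :: "nat list \<Rightarrow> nat \<Rightarrow> nat \<Rightarrow> constr list \<Rightarrow> bool" where
  "instance_wf ps k n C \<longleftrightarrow>
     (\<forall>c\<in>set C. length (fst c) = k \<and> distinct (fst c) \<and> set (fst c) \<subseteq> {..<n} \<and>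
                snd c \<in> Hpow ps k)"

definition satisfies :: "nat list \<Rightarrow> nat list list set \<Rightarrow> constr \<Rightarrow> (nat \<Rightarrow> nat list) \<Rightarrow> bool" where
  "satisfies ps \<psi> c \<sigma> \<longleftrightarrow> tadd ps (map \<sigma> (fst c)) (snd c) \<in> \<psi>"

definition csp_val :: "nat list \<Rightarrow> nat \<Rightarrow> nat list list set \<Rightarrow> constr list \<Rightarrow> real" where
  "csp_val ps n \<psi> C =
     Max ((\<lambda>\<sigma>. real (card {i. i < length C \<and> satisfies ps \<psi> (C ! i) \<sigma>}) / real (length C))
          ` ({..<n} \<rightarrow>\<^sub>E Hset ps))"

definition zero_instance :: "nat list \<Rightarrow> constr list \<Rightarrow> constr list" where
  "zero_instance ps C = map (\<lambda>(js, as). (js, map (\<lambda>_. hzero ps) as)) C"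

datatype vtx =
    Var nat "nat list"                   \<comment> \<open>x |-> b\<close>
  | RowW nat nat "nat list"              \<comment> \<open>w_R for variable x, coordinate i, row through r (r!i=0)\<close>
  | RowLeaf nat nat "nat list" nat       \<comment> \<open>pendant vertices attached to w_R\<close>
  | CycU nat nat "nat list" nat          \<comment> \<open>u for edge j of the cycle of row R\<close>
  | CycV nat nat "nat list" nat          \<comment> \<open>v for edge j of the cycle of row R\<close>
  | Con nat "nat list list"              \<comment> \<open>constraint vertex: constraint index, assignment alpha\<close>

text \<open>An i-row is {r[i:=j] | j < p_i} for a representative r in H with r!i = 0.
Coordinate i (0-indexed) is the paper's (i+1)-th coordinate, so its row vertex w_R gets
i+1 pendant vertices.\<close>

definition gadget_vertices :: "nat list \<Rightarrow> nat \<Rightarrow> vtx set" where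
  "gadget_vertices ps x =
     {Var x b | b. b \<in> Hset ps}
   \<union> (if length ps > 1 then
        {RowW x i r | i r. i < length ps \<and> r \<in> Hset ps \<and> r ! i = 0}
      \<union> {RowLeaf x i r l | i r l. i < length ps \<and> r \<in> Hset ps \<and> r ! i = 0 \<and> l < Suc i}
      else {})
   \<union> {CycU x i r j | i r j. i < length ps \<and> r \<in> Hset ps \<and> r ! i = 0 \<and> ps ! i \<ge> 3 \<and> j < ps ! i}
   \<union> {CycV x i r j | i r j. i < length ps \<and> r \<in> Hset ps \<and> r ! i = 0 \<and> ps ! i \<ge> 3 \<and> j < ps ! i}"

definition gadget_edges :: "nat list \<Rightarrow> nat \<Rightarrow> vtx set set" where
  "gadget_edges ps x =
     (if length ps > 1 then
        {{RowW x i r, Var x (r[i := j])} | i r j.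
            i < length ps \<and> r \<in> Hset ps \<and> r ! i = 0 \<and> j < ps ! i}
      \<union> {{RowW x i r, RowLeaf x i r l} | i r l.
            i < length ps \<and> r \<in> Hset ps \<and> r ! i = 0 \<and> l < Suc i}
      else {})
   \<union> {{Var x (r[i := 0]), Var x (r[i := 1])} | i r.
            i < length ps \<and> r \<in> Hset ps \<and> r ! i = 0 \<and> ps ! i = 2}
   \<union> {{Var x (r[i := j]), Var x (r[i := (j + 1) mod ps ! i])} | i r j.
            i < length ps \<and> r \<in> Hset ps \<and> r ! i = 0 \<and> ps ! i \<ge> 3 \<and> j < ps ! i}
   \<union> {{CycU x i r j, Var x (r[i := j])} | i r j.
            i < length ps \<and> r \<in> Hset ps \<and> r ! i = 0 \<and> ps ! i \<ge> 3 \<and> j < ps ! i}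
   \<union> {{CycU x i r j, Var x (r[i := (j + 1) mod ps ! i])} | i r j.
            i < length ps \<and> r \<in> Hset ps \<and> r ! i = 0 \<and> ps ! i \<ge> 3 \<and> j < ps ! i}
   \<union> {{CycU x i r j, CycV x i r j} | i r j.
            i < length ps \<and> r \<in> Hset ps \<and> r ! i = 0 \<and> ps ! i \<ge> 3 \<and> j < ps ! i}
   \<union> {{CycV x i r j, Var x (r[i := (j + 1) mod ps ! i])} | i r j.
            i < length ps \<and> r \<in> Hset ps \<and> r ! i = 0 \<and> ps ! i \<ge> 3 \<and> j < ps ! i}"

text \<open>Constraint vertices of constraint number c = (js, as): one per assignment alpha
(alpha!l is the value of x_{js!l}) satisfying the constraint.\<close>

definition constraint_vertices :: "nat list \<Rightarrow> nat list list set \<Rightarrow> nat \<Rightarrow> constr \<Rightarrow> vtx set" where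
  "constraint_vertices ps \<psi> c C =
     {Con c \<alpha> | \<alpha>. \<alpha> \<in> Hpow ps (length (fst C)) \<and> tadd ps \<alpha> (snd C) \<in> \<psi>}"

definition constraint_edges :: "nat list \<Rightarrow> nat list list set \<Rightarrow> nat \<Rightarrow> constr \<Rightarrow> vtx set set" where
  "constraint_edges ps \<psi> c C =
     {{u, v} | u v. u \<in> constraint_vertices ps \<psi> c C \<and> v \<in> constraint_vertices ps \<psi> c C \<and> u \<noteq> v}
   \<union> {{Con c \<alpha>, Var (fst C ! l) (\<alpha> ! l)} | \<alpha> l.
        Con c \<alpha> \<in> constraint_vertices ps \<psi> c C \<and> l < length (fst C)}"

text \<open>A graph is a pair (vertex set, edge set), edges being 2-element vertex sets.\<close>

definition graph_of :: "nat list \<Rightarrow> nat \<Rightarrow> nat list list set \<Rightarrow> constr list \<Rightarrow> vtx set \<times> vtx set set" where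
  "graph_of ps n \<psi> C =
     ((\<Union>x<n. gadget_vertices ps x) \<union> (\<Union>c<length C. constraint_vertices ps \<psi> c (C ! c)),
      (\<Union>x<n. gadget_edges ps x) \<union> (\<Union>c<length C. constraint_edges ps \<psi> c (C ! c)))"

definition GI :: "'v set \<times> 'v set set \<Rightarrow> 'w set \<times> 'w set set \<Rightarrow> real" where
  "GI G G' =
     Max ((\<lambda>\<pi>. real (card {e \<in> snd G. \<pi> ` e \<in> snd G'}) / real (max (card (snd G)) (card (snd G'))))
          ` {\<pi>. bij_betw \<pi> (fst G) (fst G')})"

end

theory Submission
  imports Defs
begin



lemma hadd_len[simp]: "length (hadd ps h g) = length ps" by (simp add: hadd_def)
lemma hadd_nth[simp]: "i < length ps \<Longrightarrow> hadd ps h g ! i = (h!i + g!i) mod ps!i" by (simp add: hadd_def)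
lemma hneg_len[simp]: "length (hneg ps h) = length ps" by (simp add: hneg_def)
lemma hneg_nth[simp]: "i < length ps \<Longrightarrow> hneg ps h ! i = (ps!i - h!i) mod ps!i" by (simp add: hneg_def)
lemma hzero_len[simp]: "length (hzero ps) = length ps" by (simp add: hzero_def)
lemma hzero_nth[simp]: "i < length ps \<Longrightarrow> hzero ps ! i = 0" by (simp add: hzero_def)

lemma HsetI: "length h = length ps \<Longrightarrow> (\<And>i. i<length ps \<Longrightarrow> h!i < ps!i) \<Longrightarrow> h \<in> Hset ps"
  by (simp add: Hset_def)
lemma HsetD: "h \<in> Hset ps \<Longrightarrow> length h = length ps" "h \<in> Hset ps \<Longrightarrow> i < length ps \<Longrightarrow> h!i < ps!i"
  by (auto simp: Hset_def)

definition pos :: "nat list \<Rightarrow> bool" where "pos ps \<longleftrightarrow> (\<forall>i<length ps. ps!i > 0)"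

lemma hadd_Hset: "pos ps \<Longrightarrow> hadd ps h g \<in> Hset ps"
  by (rule HsetI) (auto simp: pos_def)
lemma hneg_Hset: "pos ps \<Longrightarrow> hneg ps h \<in> Hset ps"
  by (rule HsetI) (auto simp: pos_def)
lemma hzero_Hset: "pos ps \<Longrightarrow> hzero ps \<in> Hset ps"
  by (rule HsetI) (auto simp: pos_def)

lemma heqI: "length a = length ps \<Longrightarrow> length b = length ps \<Longrightarrow> (\<And>i. i<length ps \<Longrightarrow> a!i = b!i) \<Longrightarrow> a = b"
  by (simp add: nth_equalityI)

lemma hadd_assoc: "hadd ps (hadd ps a b) c = hadd ps a (hadd ps b c)"
  by (rule heqI) (auto simp: mod_add_left_eq mod_add_right_eq add.assoc)
lemma hadd_comm: "hadd ps a b = hadd ps b a"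
  by (rule heqI) (auto simp: add.commute)
lemma hadd_zero: "a \<in> Hset ps \<Longrightarrow> hadd ps a (hzero ps) = a"
  by (rule heqI) (auto simp: HsetD)
lemma hadd_neg: "a \<in> Hset ps \<Longrightarrow> hadd ps a (hneg ps a) = hzero ps"
proof (rule heqI)
  fix i assume a: "a \<in> Hset ps" and i: "i < length ps"
  have "a!i < ps!i" using a i by (simp add: HsetD)
  then show "hadd ps a (hneg ps a) ! i = hzero ps ! i" using i
    by (simp add: mod_add_right_eq)
qed auto

lemma hneg_unique: assumes "a \<in> Hset ps" "b \<in> Hset ps" "hadd ps a b = hzero ps" "pos ps"
  shows "b = hneg ps a"
proof -
  have "b = hadd ps b (hadd ps a (hneg ps a))" using assms by (simp add: hadd_neg hadd_zero)
  also have "\<dots> = hadd ps (hadd ps a b) (hneg ps a)" by (metis hadd_assoc hadd_comm)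
  also have "\<dots> = hneg ps a" using assms by (metis hadd_comm hadd_zero hneg_Hset)
  finally show ?thesis .
qed

lemma hneg_neg: "pos ps \<Longrightarrow> a \<in> Hset ps \<Longrightarrow> hneg ps (hneg ps a) = a"
  by (metis hadd_comm hadd_neg hneg_Hset hneg_unique)

lemma hneg_add: assumes "pos ps" "a \<in> Hset ps" "b \<in> Hset ps"
  shows "hneg ps (hadd ps a b) = hadd ps (hneg ps a) (hneg ps b)"
proof -
  have "hadd ps (hadd ps a b) (hadd ps (hneg ps a) (hneg ps b)) = hadd ps (hadd ps a (hneg ps a)) (hadd ps b (hneg ps b))"
    by (metis hadd_assoc hadd_comm)
  also have "\<dots> = hzero ps" using assms by (simp add: hadd_neg hadd_zero hzero_Hset)
  finally show ?thesis using assms by (metis hadd_Hset hneg_unique)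
qed




lemma tadd_len[simp]: "length (tadd ps a b) = min (length a) (length b)" by (simp add: tadd_def)
lemma tadd_nth[simp]: "l < length a \<Longrightarrow> l < length b \<Longrightarrow> tadd ps a b ! l = hadd ps (a!l) (b!l)"
  by (simp add: tadd_def)

lemma HpowI: "length a = k \<Longrightarrow> (\<And>l. l < k \<Longrightarrow> a!l \<in> Hset ps) \<Longrightarrow> a \<in> Hpow ps k"
  by (auto simp: Hpow_def in_set_conv_nth)
lemma HpowD: "a \<in> Hpow ps k \<Longrightarrow> length a = k" "a \<in> Hpow ps k \<Longrightarrow> l < k \<Longrightarrow> a!l \<in> Hset ps"
  by (auto simp: Hpow_def)

lemma tadd_Hpow: "pos ps \<Longrightarrow> length a = k \<Longrightarrow> length b = k \<Longrightarrow> tadd ps a b \<in> Hpow ps k"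
  by (rule HpowI) (auto simp: hadd_Hset)

lemma tadd_assoc: "length a = k \<Longrightarrow> length b = k \<Longrightarrow> length c = k \<Longrightarrow>
   tadd ps (tadd ps a b) c = tadd ps a (tadd ps b c)"
  by (rule nth_equalityI) (auto simp: hadd_assoc)
lemma tadd_comm: "length a = length b \<Longrightarrow> tadd ps a b = tadd ps b a"
  by (rule nth_equalityI) (auto simp: hadd_comm)

definition tzero :: "nat list \<Rightarrow> nat \<Rightarrow> nat list list" where "tzero ps k = replicate k (hzero ps)"
definition tneg :: "nat list \<Rightarrow> nat list list \<Rightarrow> nat list list" where "tneg ps a = map (hneg ps) a"

lemma tneg_len[simp]: "length (tneg ps a) = length a" by (simp add: tneg_def)
lemma tneg_nth[simp]: "l < length a \<Longrightarrow> tneg ps a ! l = hneg ps (a!l)" by (simp add: tneg_def)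
lemma tzero_len[simp]: "length (tzero ps k) = k" by (simp add: tzero_def)

lemma tadd_zero: "a \<in> Hpow ps k \<Longrightarrow> tadd ps a (tzero ps k) = a"
  by (rule nth_equalityI) (auto simp: tzero_def HpowD hadd_zero)
lemma tadd_negr: "a \<in> Hpow ps k \<Longrightarrow> tadd ps a (tneg ps a) = tzero ps k"
  by (rule nth_equalityI) (auto simp: tzero_def HpowD hadd_neg)
lemma tneg_Hpow: "pos ps \<Longrightarrow> length a = k \<Longrightarrow> tneg ps a \<in> Hpow ps k"
  by (rule HpowI) (auto simp: hneg_Hset)

locale grp =
  fixes ps :: "nat list" and k :: nat and \<psi> :: "nat list list set"
  assumes pos: "pos ps" and bpi: "bpi_subgroup ps k \<psi>"
begin

lemma psi_sub: "\<psi> \<subseteq> Hpow ps k" using bpi by (simp add: bpi_subgroup_def)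
lemma psi_add: "a \<in> \<psi> \<Longrightarrow> b \<in> \<psi> \<Longrightarrow> tadd ps a b \<in> \<psi>" using bpi by (simp add: bpi_subgroup_def)
lemma psi_neg: "a \<in> \<psi> \<Longrightarrow> tneg ps a \<in> \<psi>" using bpi by (simp add: bpi_subgroup_def tneg_def)
lemma psi_zero: "tzero ps k \<in> \<psi>" using bpi by (simp add: bpi_subgroup_def tzero_def)

lemma tzero_Hpow: "tzero ps k \<in> Hpow ps k"
  using psi_sub psi_zero by blast

lemma psi_finite: "finite \<psi>"
proof -
  have "Hset ps \<subseteq> {h. set h \<subseteq> {..<sum_list ps} \<and> length h = length ps}"
    by (auto simp: Hset_def in_set_conv_nth) (meson elem_le_sum_list less_le_trans)
  hence fH: "finite (Hset ps)" by (rule finite_subset) (rule finite_lists_length_eq, simp)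
  have "Hpow ps k \<subseteq> {h. set h \<subseteq> Hset ps \<and> length h = k}" by (auto simp: Hpow_def)
  hence "finite (Hpow ps k)" by (rule finite_subset) (rule finite_lists_length_eq[OF fH])
  thus ?thesis using psi_sub finite_subset by blast
qed

lemma coset_card: assumes "as \<in> Hpow ps k"
  shows "card {\<alpha> \<in> Hpow ps k. tadd ps \<alpha> as \<in> \<psi>} = card \<psi>"
proof -
  have la: "length as = k" using assms HpowD by auto
  have "bij_betw (\<lambda>\<alpha>. tadd ps \<alpha> as) {\<alpha> \<in> Hpow ps k. tadd ps \<alpha> as \<in> \<psi>} \<psi>"
  proof (rule bij_betw_byWitness[where f'="\<lambda>\<beta>. tadd ps \<beta> (tneg ps as)"])
    show "\<forall>a\<in>{\<alpha> \<in> Hpow ps k. tadd ps \<alpha> as \<in> \<psi>}. tadd ps (tadd ps a as) (tneg ps as) = a"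
      using la assms by (auto simp: tadd_assoc HpowD tadd_negr tadd_zero)
    have "tadd ps (tadd ps b (tneg ps as)) as = b" if "b \<in> \<psi>" for b
    proof -
      have b: "b \<in> Hpow ps k" using that psi_sub by blast
      have "tadd ps (tadd ps b (tneg ps as)) as = tadd ps b (tadd ps (tneg ps as) as)"
        using la b by (simp add: tadd_assoc HpowD)
      also have "\<dots> = b" using la b assms by (simp add: tadd_comm[of "tneg ps as"] tadd_negr tadd_zero)
      finally show ?thesis .
    qed
    thus "\<forall>a'\<in>\<psi>. tadd ps (tadd ps a' (tneg ps as)) as = a'" by blast
    show "(\<lambda>\<alpha>. tadd ps \<alpha> as) ` {\<alpha> \<in> Hpow ps k. tadd ps \<alpha> as \<in> \<psi>} \<subseteq> \<psi>" by auto
    show "(\<lambda>\<beta>. tadd ps \<beta> (tneg ps as)) ` \<psi> \<subseteq> {\<alpha> \<in> Hpow ps k. tadd ps \<alpha> as \<in> \<psi>}"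
      using \<open>\<forall>a'\<in>\<psi>. _\<close> psi_sub la pos by (auto simp: HpowD intro!: tadd_Hpow)
  qed
  thus ?thesis by (rule bij_betw_same_card)
qed

end



fun piv :: "nat list \<Rightarrow> (nat \<Rightarrow> nat list) \<Rightarrow> (nat \<Rightarrow> nat list list) \<Rightarrow> vtx \<Rightarrow> vtx" where
  "piv ps D e (Var x b) = Var x (hadd ps b (D x))"
| "piv ps D e (RowW x i r) = RowW x i ((hadd ps r (D x))[i:=0])"
| "piv ps D e (RowLeaf x i r l) = RowLeaf x i ((hadd ps r (D x))[i:=0]) l"
| "piv ps D e (CycU x i r j) = CycU x i ((hadd ps r (D x))[i:=0]) ((j + D x ! i) mod ps ! i)"
| "piv ps D e (CycV x i r j) = CycV x i ((hadd ps r (D x))[i:=0]) ((j + D x ! i) mod ps ! i)"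
| "piv ps D e (Con c \<alpha>) = Con c (tadd ps \<alpha> (e c))"

lemma V_Var: "Var x b \<in> fst (graph_of ps n \<psi> C) \<longleftrightarrow> x < n \<and> b \<in> Hset ps"
  by (auto simp: graph_of_def gadget_vertices_def constraint_vertices_def)
lemma V_RowW: "RowW x i r \<in> fst (graph_of ps n \<psi> C) \<longleftrightarrow> x < n \<and> length ps > 1 \<and> i < length ps \<and> r \<in> Hset ps \<and> r!i = 0"
  by (auto simp: graph_of_def gadget_vertices_def constraint_vertices_def)
lemma V_RowLeaf: "RowLeaf x i r l \<in> fst (graph_of ps n \<psi> C) \<longleftrightarrow> x < n \<and> length ps > 1 \<and> i < length ps \<and> r \<in> Hset ps \<and> r!i = 0 \<and> l < Suc i"
  by (auto simp: graph_of_def gadget_vertices_def constraint_vertices_def)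
lemma V_CycU: "CycU x i r j \<in> fst (graph_of ps n \<psi> C) \<longleftrightarrow> x < n \<and> i < length ps \<and> r \<in> Hset ps \<and> r!i = 0 \<and> ps!i \<ge> 3 \<and> j < ps!i"
  by (auto simp: graph_of_def gadget_vertices_def constraint_vertices_def)
lemma V_CycV: "CycV x i r j \<in> fst (graph_of ps n \<psi> C) \<longleftrightarrow> x < n \<and> i < length ps \<and> r \<in> Hset ps \<and> r!i = 0 \<and> ps!i \<ge> 3 \<and> j < ps!i"
  by (auto simp: graph_of_def gadget_vertices_def constraint_vertices_def)
lemma V_Con: "Con c \<alpha> \<in> fst (graph_of ps n \<psi> C) \<longleftrightarrow> c < length C \<and> \<alpha> \<in> Hpow ps (length (fst (C!c))) \<and> tadd ps \<alpha> (snd (C!c)) \<in> \<psi>"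
  by (auto simp: graph_of_def gadget_vertices_def constraint_vertices_def split: if_splits)

lemmas V_simps = V_Var V_RowW V_RowLeaf V_CycU V_CycV V_Con

lemma cv_Con: "Con c' \<alpha> \<in> constraint_vertices ps \<psi> c X \<longleftrightarrow> c' = c \<and> \<alpha> \<in> Hpow ps (length (fst X)) \<and> tadd ps \<alpha> (snd X) \<in> \<psi>"
  by (auto simp: constraint_vertices_def)

lemma cv_shape: "u \<in> constraint_vertices ps \<psi> c X \<Longrightarrow> \<exists>\<alpha>. u = Con c \<alpha>"
  by (auto simp: constraint_vertices_def)

lemma upd_Hset: "pos ps \<Longrightarrow> i < length ps \<Longrightarrow> (hadd ps r d)[i:=0] \<in> Hset ps"
  by (rule HsetI) (auto simp: pos_def nth_list_update)

lemma mod_lt: "pos ps \<Longrightarrow> i < length ps \<Longrightarrow> a mod ps!i < ps!i"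
  by (simp add: pos_def)




lemma ge_cases:
  assumes "f \<in> gadget_edges ps x"
  obtains (e1) i r j where "length ps > 1" "i < length ps" "r \<in> Hset ps" "r!i = 0" "j < ps!i" "f = {RowW x i r, Var x (r[i := j])}"
  | (e2) i r l where "length ps > 1" "i < length ps" "r \<in> Hset ps" "r!i = 0" "l < Suc i" "f = {RowW x i r, RowLeaf x i r l}"
  | (e3) i r where "i < length ps" "r \<in> Hset ps" "r!i = 0" "ps!i = 2" "f = {Var x (r[i := 0]), Var x (r[i := 1])}"
  | (e4) i r j where "i < length ps" "r \<in> Hset ps" "r!i = 0" "ps!i \<ge> 3" "j < ps!i" "f = {Var x (r[i := j]), Var x (r[i := (j + 1) mod ps ! i])}"
  | (e5) i r j where "i < length ps" "r \<in> Hset ps" "r!i = 0" "ps!i \<ge> 3" "j < ps!i" "f = {CycU x i r j, Var x (r[i := j])}"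
  | (e6) i r j where "i < length ps" "r \<in> Hset ps" "r!i = 0" "ps!i \<ge> 3" "j < ps!i" "f = {CycU x i r j, Var x (r[i := (j + 1) mod ps ! i])}"
  | (e7) i r j where "i < length ps" "r \<in> Hset ps" "r!i = 0" "ps!i \<ge> 3" "j < ps!i" "f = {CycU x i r j, CycV x i r j}"
  | (e8) i r j where "i < length ps" "r \<in> Hset ps" "r!i = 0" "ps!i \<ge> 3" "j < ps!i" "f = {CycV x i r j, Var x (r[i := (j + 1) mod ps ! i])}"
  using assms unfolding gadget_edges_def by (auto split: if_splits)

lemma geI1: "length ps > 1 \<Longrightarrow> i < length ps \<Longrightarrow> r \<in> Hset ps \<Longrightarrow> r!i = 0 \<Longrightarrow> j < ps!i \<Longrightarrow> f = {RowW x i r, Var x (r[i := j])} \<Longrightarrow> f \<in> gadget_edges ps x"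
  unfolding gadget_edges_def apply (rule UnI1)+ apply (subst if_P, assumption) apply (rule UnI1) by blast
lemma geI2: "length ps > 1 \<Longrightarrow> i < length ps \<Longrightarrow> r \<in> Hset ps \<Longrightarrow> r!i = 0 \<Longrightarrow> l < Suc i \<Longrightarrow> f = {RowW x i r, RowLeaf x i r l} \<Longrightarrow> f \<in> gadget_edges ps x"
  unfolding gadget_edges_def apply (rule UnI1)+ apply (subst if_P, assumption) apply (rule UnI2) by blast
lemma geI3: "i < length ps \<Longrightarrow> r \<in> Hset ps \<Longrightarrow> r!i = 0 \<Longrightarrow> ps!i = 2 \<Longrightarrow> f = {Var x (r[i := 0]), Var x (r[i := 1])} \<Longrightarrow> f \<in> gadget_edges ps x"
  unfolding gadget_edges_def apply (rule UnI1) apply (rule UnI1) apply (rule UnI1) apply (rule UnI1) apply (rule UnI1) apply (rule UnI2) by blast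
lemma geI4: "i < length ps \<Longrightarrow> r \<in> Hset ps \<Longrightarrow> r!i = 0 \<Longrightarrow> ps!i \<ge> 3 \<Longrightarrow> j < ps!i \<Longrightarrow> f = {Var x (r[i := j]), Var x (r[i := (j + 1) mod ps ! i])} \<Longrightarrow> f \<in> gadget_edges ps x"
  unfolding gadget_edges_def apply (rule UnI1) apply (rule UnI1) apply (rule UnI1) apply (rule UnI1) apply (rule UnI2) by blast
lemma geI5: "i < length ps \<Longrightarrow> r \<in> Hset ps \<Longrightarrow> r!i = 0 \<Longrightarrow> ps!i \<ge> 3 \<Longrightarrow> j < ps!i \<Longrightarrow> f = {CycU x i r j, Var x (r[i := j])} \<Longrightarrow> f \<in> gadget_edges ps x"
  unfolding gadget_edges_def apply (rule UnI1) apply (rule UnI1) apply (rule UnI1) apply (rule UnI2) by blast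
lemma geI6: "i < length ps \<Longrightarrow> r \<in> Hset ps \<Longrightarrow> r!i = 0 \<Longrightarrow> ps!i \<ge> 3 \<Longrightarrow> j < ps!i \<Longrightarrow> f = {CycU x i r j, Var x (r[i := (j + 1) mod ps ! i])} \<Longrightarrow> f \<in> gadget_edges ps x"
  unfolding gadget_edges_def apply (rule UnI1) apply (rule UnI1) apply (rule UnI2) by blast
lemma geI7: "i < length ps \<Longrightarrow> r \<in> Hset ps \<Longrightarrow> r!i = 0 \<Longrightarrow> ps!i \<ge> 3 \<Longrightarrow> j < ps!i \<Longrightarrow> f = {CycU x i r j, CycV x i r j} \<Longrightarrow> f \<in> gadget_edges ps x"
  unfolding gadget_edges_def apply (rule UnI1) apply (rule UnI2) by blast
lemma geI8: "i < length ps \<Longrightarrow> r \<in> Hset ps \<Longrightarrow> r!i = 0 \<Longrightarrow> ps!i \<ge> 3 \<Longrightarrow> j < ps!i \<Longrightarrow> f = {CycV x i r j, Var x (r[i := (j + 1) mod ps ! i])} \<Longrightarrow> f \<in> gadget_edges ps x"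
  unfolding gadget_edges_def apply (rule UnI2) by blast

lemma hadd_upd: "length r = length ps \<Longrightarrow> i < length ps \<Longrightarrow>
  hadd ps (r[i:=j]) d = (hadd ps r d)[i := (j + d!i) mod ps!i]"
  by (rule nth_equalityI) (auto simp: nth_list_update)

lemma mod_suc: "((j + 1) mod p + d) mod p = ((j + d) mod p + 1) mod (p::nat)"
  by (metis add.commute add.left_commute mod_add_left_eq)
lemma mod_suc': "(Suc j mod p + d) mod p = Suc ((j + d) mod p) mod (p::nat)"
  using mod_suc[of j p d] by simp

lemma gadget_map:
  assumes pos: "pos ps" and D: "D x \<in> Hset ps" and f: "f \<in> gadget_edges ps x"
  shows "piv ps D e ` f \<in> gadget_edges ps x"
  using f
proof (cases rule: ge_cases)
  case (e1 i r j)
  then show ?thesis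
    by (intro geI1[where i=i and r="(hadd ps (r) (D x))[i:=0]" and j="(j + D x ! i) mod ps!i"])
       (auto simp: upd_Hset pos mod_lt hadd_upd HsetD)
next
  case (e2 i r l)
  then show ?thesis
    by (intro geI2[where i=i and r="(hadd ps (r) (D x))[i:=0]" and l=l]) (auto simp: upd_Hset pos)
next
  case (e3 i r)
  have "D x ! i < 2" using D e3 HsetD by metis
  then consider "D x ! i = 0" | "D x ! i = 1" by linarith
  then show ?thesis
  proof cases
    case 1
    then show ?thesis using e3
      by (intro geI3[where i=i and r="(hadd ps (r) (D x))[i:=0]" and i=i]) (auto simp: upd_Hset pos hadd_upd HsetD)
  next
    case 2
    then show ?thesis using e3
      by (intro geI3[where i=i and r="(hadd ps (r) (D x))[i:=0]" and i=i]) (auto simp: upd_Hset pos hadd_upd HsetD)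
  qed
next
  case (e4 i r j)
  then show ?thesis
    by (intro geI4[where i=i and r="(hadd ps (r) (D x))[i:=0]" and j="(j + D x ! i) mod ps!i"])
       (auto simp: upd_Hset pos mod_lt hadd_upd HsetD mod_suc mod_suc')
next
  case (e5 i r j)
  then show ?thesis
    by (intro geI5[where i=i and r="(hadd ps (r) (D x))[i:=0]" and j="(j + D x ! i) mod ps!i"])
       (auto simp: upd_Hset pos mod_lt hadd_upd HsetD mod_suc mod_suc')
next
  case (e6 i r j)
  then show ?thesis
    by (intro geI6[where i=i and r="(hadd ps (r) (D x))[i:=0]" and j="(j + D x ! i) mod ps!i"])
       (auto simp: upd_Hset pos mod_lt hadd_upd HsetD mod_suc mod_suc')
next
  case (e7 i r j)
  then show ?thesis
    by (intro geI7[where i=i and r="(hadd ps (r) (D x))[i:=0]" and j="(j + D x ! i) mod ps!i"])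
       (auto simp: upd_Hset pos mod_lt hadd_upd HsetD mod_suc mod_suc')
next
  case (e8 i r j)
  then show ?thesis
    by (intro geI8[where i=i and r="(hadd ps (r) (D x))[i:=0]" and j="(j + D x ! i) mod ps!i"])
       (auto simp: upd_Hset pos mod_lt hadd_upd HsetD mod_suc mod_suc')
qed

lemma gadget_noCon: "f \<in> gadget_edges ps x \<Longrightarrow> Con c \<alpha> \<notin> f"
  by (erule ge_cases) auto

lemma gadget_inV: "x < n \<Longrightarrow> pos ps \<Longrightarrow> f \<in> gadget_edges ps x \<Longrightarrow> f \<subseteq> fst (graph_of ps n \<psi> C)"
  apply (erule ge_cases)
  apply (simp_all add: V_simps)
  apply (auto simp: HsetD pos_def nth_list_update intro!: HsetI)
  done




definition W :: "nat list \<Rightarrow> nat list list set \<Rightarrow> constr list \<Rightarrow> nat \<Rightarrow> vtx set set" where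
  "W ps \<psi> C c = {{Con c \<alpha>, Var (fst (C!c) ! l) (\<alpha> ! l)} | \<alpha> l.
        Con c \<alpha> \<in> constraint_vertices ps \<psi> c (C!c) \<and> l < length (fst (C!c))}"

definition Q :: "nat list \<Rightarrow> nat list list set \<Rightarrow> constr list \<Rightarrow> nat \<Rightarrow> vtx set set" where
  "Q ps \<psi> C c = {{u, v} | u v. u \<in> constraint_vertices ps \<psi> c (C!c) \<and> v \<in> constraint_vertices ps \<psi> c (C!c) \<and> u \<noteq> v}"

lemma ce_eq: "constraint_edges ps \<psi> c (C!c) = Q ps \<psi> C c \<union> W ps \<psi> C c"
  by (simp add: constraint_edges_def Q_def W_def)

lemma E_eq: "snd (graph_of ps n \<psi> C) = (\<Union>x<n. gadget_edges ps x) \<union> (\<Union>c<length C. Q ps \<psi> C c \<union> W ps \<psi> C c)"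
  by (simp add: graph_of_def ce_eq)

definition U :: "nat list \<Rightarrow> nat list list set \<Rightarrow> constr list \<Rightarrow> nat set \<Rightarrow> vtx set set" where
  "U ps \<psi> C G = (\<Union>c\<in>{c. c < length C \<and> c \<notin> G}. W ps \<psi> C c)"

lemma W_shape: "g \<in> W ps \<psi> C c \<Longrightarrow> \<exists>\<alpha> y b. g = {Con c \<alpha>, Var y b}"
  by (auto simp: W_def)

lemma U_shape: "g \<in> U ps \<psi> C G \<Longrightarrow> \<exists>c \<alpha> y b. c \<notin> G \<and> g = {Con c \<alpha>, Var y b}"
  by (auto simp: U_def W_def)

lemma wfD: assumes "instance_wf ps k n C" "c < length C"
  shows "length (fst (C!c)) = k" "distinct (fst (C!c))" "set (fst (C!c)) \<subseteq> {..<n}" "snd (C!c) \<in> Hpow ps k"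
  using assms by (auto simp: instance_wf_def)

locale pair = grp +
  fixes n :: nat and C1 C2 :: "constr list" and D :: "nat \<Rightarrow> nat list" and e :: "nat \<Rightarrow> nat list list"
    and Good :: "nat set"
  assumes wf1: "instance_wf ps k n C1" and wf2: "instance_wf ps k n C2"
    and fsts: "map fst C1 = map fst C2"
    and Dh: "\<And>x. x < n \<Longrightarrow> D x \<in> Hset ps"
    and eh: "\<And>c. c < length C1 \<Longrightarrow> e c \<in> Hpow ps k"
    and cond: "\<And>c \<alpha>. c < length C1 \<Longrightarrow> \<alpha> \<in> Hpow ps k \<Longrightarrow> tadd ps \<alpha> (snd (C1!c)) \<in> \<psi> \<Longrightarrow>
                   tadd ps (tadd ps \<alpha> (e c)) (snd (C2!c)) \<in> \<psi>"
    and good: "\<And>c. c \<in> Good \<Longrightarrow> c < length C1 \<Longrightarrow> e c = map D (fst (C1!c))"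
begin

lemma len_eq: "length C2 = length C1" using fsts by (metis length_map)
lemma fst_eq: "c < length C1 \<Longrightarrow> fst (C2!c) = fst (C1!c)" using fsts by (metis len_eq nth_map)

abbreviation "\<pi> \<equiv> piv ps D e"

lemma con_map: assumes "c < length C1" "\<alpha> \<in> Hpow ps k" "tadd ps \<alpha> (snd (C1!c)) \<in> \<psi>"
  shows "Con c (tadd ps \<alpha> (e c)) \<in> fst (graph_of ps n \<psi> C2)"
proof -
  have "tadd ps \<alpha> (e c) \<in> Hpow ps k" using assms eh[of c] pos by (auto intro!: tadd_Hpow simp: HpowD)
  thus ?thesis using assms cond len_eq wfD[OF wf2, of c] by (simp add: V_Con)
qed

lemma vmap: assumes "v \<in> fst (graph_of ps n \<psi> C1)" shows "\<pi> v \<in> fst (graph_of ps n \<psi> C2)"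
  using assms
proof (cases v)
  case (Var x b) then show ?thesis using assms Dh pos by (auto simp: V_simps hadd_Hset)
next
  case (RowW x i r) then show ?thesis using assms Dh pos by (auto simp: V_simps upd_Hset)
next
  case (RowLeaf x i r l) then show ?thesis using assms Dh pos by (auto simp: V_simps upd_Hset)
next
  case (CycU x i r j) then show ?thesis using assms Dh pos by (auto simp: V_simps upd_Hset mod_lt)
next
  case (CycV x i r j) then show ?thesis using assms Dh pos by (auto simp: V_simps upd_Hset mod_lt)
next
  case (Con c \<alpha>) then show ?thesis using assms con_map wfD[OF wf1, of c] by (auto simp: V_simps)
qed

lemma emap:
  assumes inj: "inj_on \<pi> (fst (graph_of ps n \<psi> C1))"
    and f: "f \<in> snd (graph_of ps n \<psi> C1)" and nU: "f \<notin> U ps \<psi> C1 Good"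
  shows "\<pi> ` f \<in> snd (graph_of ps n \<psi> C2) \<and> \<pi> ` f \<notin> U ps \<psi> C2 Good"
proof -
  from f consider (g) x where "x < n" "f \<in> gadget_edges ps x"
    | (q) c where "c < length C1" "f \<in> Q ps \<psi> C1 c"
    | (w) c where "c < length C1" "f \<in> W ps \<psi> C1 c"
    by (auto simp: E_eq)
  then show ?thesis
  proof cases
    case g
    then have "\<pi> ` f \<in> gadget_edges ps x" using gadget_map pos Dh by blast
    moreover have "\<pi> ` f \<notin> U ps \<psi> C2 Good"
      using gadget_noCon[OF calculation] U_shape by blast
    ultimately show ?thesis using g by (auto simp: E_eq)
  next
    case q
    then obtain u v where uv: "u \<in> constraint_vertices ps \<psi> c (C1!c)" "v \<in> constraint_vertices ps \<psi> c (C1!c)" "u \<noteq> v" "f = {u, v}"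
      by (auto simp: Q_def)
    obtain a where a: "u = Con c a" using uv cv_shape by blast
    obtain b where b: "v = Con c b" using uv cv_shape by blast
    have ua: "a \<in> Hpow ps k" "tadd ps a (snd (C1!c)) \<in> \<psi>" using uv a wfD[OF wf1 q(1)] by (auto simp: cv_Con)
    have vb: "b \<in> Hpow ps k" "tadd ps b (snd (C1!c)) \<in> \<psi>" using uv b wfD[OF wf1 q(1)] by (auto simp: cv_Con)
    have uV: "u \<in> fst (graph_of ps n \<psi> C1)" "v \<in> fst (graph_of ps n \<psi> C1)"
      using uv(1,2) q(1) by (auto simp: graph_of_def)
    have ne: "\<pi> u \<noteq> \<pi> v" using inj uV uv(3) by (meson inj_on_contraD)
    have "\<pi> u \<in> constraint_vertices ps \<psi> c (C2!c)" "\<pi> v \<in> constraint_vertices ps \<psi> c (C2!c)"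
      using con_map[OF q(1) ua] con_map[OF q(1) vb] a b len_eq q(1) by (auto simp: V_Con cv_Con)
    hence "\<pi> ` f \<in> Q ps \<psi> C2 c" using ne uv(4) unfolding Q_def by blast
    moreover have "\<pi> ` f \<notin> U ps \<psi> C2 Good" using U_shape uv(4) a b by fastforce
    ultimately show ?thesis using q len_eq by (auto simp: E_eq)
  next
    case w
    have cG: "c \<in> Good" using w nU by (auto simp: U_def)
    obtain \<alpha> l where al: "Con c \<alpha> \<in> constraint_vertices ps \<psi> c (C1!c)" "l < length (fst (C1!c))"
      "f = {Con c \<alpha>, Var (fst (C1!c) ! l) (\<alpha> ! l)}" using w by (auto simp: W_def)
    have kk: "length (fst (C1!c)) = k" using wfD[OF wf1 w(1)] by simp
    have ah: "\<alpha> \<in> Hpow ps k" "tadd ps \<alpha> (snd (C1!c)) \<in> \<psi>" using al kk by (auto simp: cv_Con)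
    have ec: "e c = map D (fst (C1!c))" using good cG w(1) by blast
    have la: "length \<alpha> = k" using ah HpowD by blast
    have "tadd ps \<alpha> (e c) ! l = hadd ps (\<alpha> ! l) (D (fst (C1!c) ! l))"
      using la kk al(2) ec by simp
    hence img: "\<pi> ` f = {Con c (tadd ps \<alpha> (e c)), Var (fst (C1!c) ! l) (tadd ps \<alpha> (e c) ! l)}"
      using al(3) by simp
    have "Con c (tadd ps \<alpha> (e c)) \<in> constraint_vertices ps \<psi> c (C2!c)"
      using con_map[OF w(1) ah] len_eq w(1) by (auto simp: V_Con cv_Con)
    moreover have "\<pi> ` f = {Con c (tadd ps \<alpha> (e c)), Var (fst (C2!c) ! l) (tadd ps \<alpha> (e c) ! l)}"
      using img fst_eq[OF w(1)] by simp
    moreover have "l < length (fst (C2!c))" using al(2) fst_eq[OF w(1)] by simp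
    ultimately have "\<pi> ` f \<in> W ps \<psi> C2 c" unfolding W_def by blast
    moreover have "\<pi> ` f \<notin> U ps \<psi> C2 Good"
    proof
      assume "\<pi> ` f \<in> U ps \<psi> C2 Good"
      then obtain c' \<alpha>' y b where "c' \<notin> Good" "\<pi> ` f = {Con c' \<alpha>', Var y b}" using U_shape by blast
      hence "Con c' \<alpha>' \<in> {Con c (tadd ps \<alpha> (e c)), Var (fst (C1!c) ! l) (tadd ps \<alpha> (e c) ! l)}"
        using img by simp
      hence "c' = c" by auto
      thus False using cG \<open>c' \<notin> Good\<close> by simp
    qed
    ultimately show ?thesis using w len_eq by (auto simp: E_eq)
  qed
qed

end




lemma Hset_finite: "finite (Hset ps)"
proof -
  have "Hset ps \<subseteq> {h. set h \<subseteq> {..<sum_list ps} \<and> length h = length ps}"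
    by (auto simp: Hset_def in_set_conv_nth) (meson elem_le_sum_list less_le_trans)
  thus ?thesis by (rule finite_subset) (rule finite_lists_length_eq, simp)
qed

lemma Hpow_finite: "finite (Hpow ps k)"
proof -
  have "Hpow ps k \<subseteq> {h. set h \<subseteq> Hset ps \<and> length h = k}" by (auto simp: Hpow_def)
  thus ?thesis by (rule finite_subset) (rule finite_lists_length_eq[OF Hset_finite])
qed

lemma upd_hadd_upd: "length R = length ps \<Longrightarrow> (hadd ps (R[i:=v]) d)[i:=w] = (hadd ps R d)[i:=w]"
  by (cases "i < length ps") (auto intro!: nth_equalityI simp: nth_list_update list_update_beyond)

context grp begin

lemma piv_inv:
  assumes wf: "instance_wf ps k n C"
    and D: "\<And>x. x < n \<Longrightarrow> D x \<in> Hset ps \<and> D' x \<in> Hset ps \<and> hadd ps (D x) (D' x) = hzero ps"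
    and e: "\<And>c. c < length C \<Longrightarrow> e c \<in> Hpow ps k \<and> e' c \<in> Hpow ps k \<and> tadd ps (e c) (e' c) = tzero ps k"
    and v: "v \<in> fst (graph_of ps n \<psi> C)"
  shows "piv ps D' e' (piv ps D e v) = v"
proof (cases v)
  case (Var x b)
  then have "x < n" "b \<in> Hset ps" using v by (auto simp: V_simps)
  then show ?thesis using Var D[of x] by (simp add: hadd_assoc hadd_zero)
next
  case (RowW x i r)
  then have h: "x < n" "r \<in> Hset ps" "r!i = 0" "i < length ps" using v by (auto simp: V_simps)
  have "(hadd ps ((hadd ps r (D x))[i := 0]) (D' x))[i := 0] = (hadd ps (hadd ps r (D x)) (D' x))[i:=0]"
    by (simp add: upd_hadd_upd)
  also have "\<dots> = r[i:=0]" using h D[of x] by (simp add: hadd_assoc hadd_zero)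
  also have "\<dots> = r" using h(3) by (metis list_update_id)
  finally show ?thesis using RowW by simp
next
  case (RowLeaf x i r l)
  then have h: "x < n" "r \<in> Hset ps" "r!i = 0" "i < length ps" using v by (auto simp: V_simps)
  have "(hadd ps ((hadd ps r (D x))[i := 0]) (D' x))[i := 0] = (hadd ps (hadd ps r (D x)) (D' x))[i:=0]"
    by (simp add: upd_hadd_upd)
  also have "\<dots> = r[i:=0]" using h D[of x] by (simp add: hadd_assoc hadd_zero)
  also have "\<dots> = r" using h(3) by (metis list_update_id)
  finally show ?thesis using RowLeaf by simp
next
  case (CycU x i r j)
  then have h: "x < n" "r \<in> Hset ps" "r!i = 0" "i < length ps" "j < ps!i" using v by (auto simp: V_simps)
  have "(hadd ps ((hadd ps r (D x))[i := 0]) (D' x))[i := 0] = (hadd ps (hadd ps r (D x)) (D' x))[i:=0]"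
    by (simp add: upd_hadd_upd)
  also have "\<dots> = r[i:=0]" using h D[of x] by (simp add: hadd_assoc hadd_zero)
  also have "\<dots> = r" using h(3) by (metis list_update_id)
  finally have 1: "(hadd ps ((hadd ps r (D x))[i := 0]) (D' x))[i := 0] = r" .
  have "(D x ! i + D' x ! i) mod ps ! i = 0" using D[of x] h by (metis hadd_nth hzero_nth)
  hence "((j + D x ! i) mod ps ! i + D' x ! i) mod ps ! i = j" using h(5)
    by (metis add.assoc mod_add_left_eq mod_add_right_eq add_0_right mod_less)
  then show ?thesis using CycU 1 by simp
next
  case (CycV x i r j)
  then have h: "x < n" "r \<in> Hset ps" "r!i = 0" "i < length ps" "j < ps!i" using v by (auto simp: V_simps)
  have "(hadd ps ((hadd ps r (D x))[i := 0]) (D' x))[i := 0] = (hadd ps (hadd ps r (D x)) (D' x))[i:=0]"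
    by (simp add: upd_hadd_upd)
  also have "\<dots> = r[i:=0]" using h D[of x] by (simp add: hadd_assoc hadd_zero)
  also have "\<dots> = r" using h(3) by (metis list_update_id)
  finally have 1: "(hadd ps ((hadd ps r (D x))[i := 0]) (D' x))[i := 0] = r" .
  have "(D x ! i + D' x ! i) mod ps ! i = 0" using D[of x] h by (metis hadd_nth hzero_nth)
  hence "((j + D x ! i) mod ps ! i + D' x ! i) mod ps ! i = j" using h(5)
    by (metis add.assoc mod_add_left_eq mod_add_right_eq add_0_right mod_less)
  then show ?thesis using CycV 1 by simp
next
  case (Con c \<alpha>)
  then have h: "c < length C" "\<alpha> \<in> Hpow ps k" using v wfD[OF wf] by (auto simp: V_simps)
  have "tadd ps (tadd ps \<alpha> (e c)) (e' c) = tadd ps \<alpha> (tadd ps (e c) (e' c))"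
    using h e[of c] HpowD(1)[of "e c"] HpowD(1)[of "e' c"] HpowD(1)[of \<alpha>] by (intro tadd_assoc) auto
  also have "\<dots> = \<alpha>" using h e[of c] by (simp add: tadd_zero)
  finally show ?thesis using Con by simp
qed

lemma E_sub: assumes wf: "instance_wf ps k n C"
  shows "snd (graph_of ps n \<psi> C) \<subseteq> Pow (fst (graph_of ps n \<psi> C))"
proof
  fix f assume f: "f \<in> snd (graph_of ps n \<psi> C)"
  from f consider (g) x where "x < n" "f \<in> gadget_edges ps x"
    | (q) c where "c < length C" "f \<in> Q ps \<psi> C c"
    | (w) c where "c < length C" "f \<in> W ps \<psi> C c"
    by (auto simp: E_eq)
  then show "f \<in> Pow (fst (graph_of ps n \<psi> C))"
  proof cases
    case g then show ?thesis using gadget_inV pos by blast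
  next
    case q then show ?thesis by (auto simp: Q_def graph_of_def)
  next
    case w
    then obtain \<alpha> l where al: "Con c \<alpha> \<in> constraint_vertices ps \<psi> c (C!c)" "l < length (fst (C!c))"
      "f = {Con c \<alpha>, Var (fst (C!c) ! l) (\<alpha> ! l)}" by (auto simp: W_def)
    have "fst (C!c) ! l < n" using wfD[OF wf w(1)] al(2) by (meson lessThan_iff nth_mem subsetD)
    moreover have "\<alpha> ! l \<in> Hset ps" using al by (auto simp: cv_Con HpowD)
    moreover have "Con c \<alpha> \<in> fst (graph_of ps n \<psi> C)" using al(1) w(1) by (auto simp: graph_of_def)
    ultimately show ?thesis using al(3) by (auto simp: V_simps)
  qed
qed

lemma V_finite: "finite (fst (graph_of ps n \<psi> C))"
proof -
  let ?H = "Hset ps" and ?I = "{..<length ps}" and ?J = "{..<sum_list ps}"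
  have fH: "finite ?H" by (rule Hset_finite)
  have "finite (gadget_vertices ps x)" for x
  proof -
    have 1: "{Var x b | b. b \<in> ?H} = Var x ` ?H" by auto
    have 2: "{RowW x i r | i r. i < length ps \<and> r \<in> ?H \<and> r ! i = 0} \<subseteq> (\<lambda>(i,r). RowW x i r) ` (?I \<times> ?H)"
      by auto
    have 3: "{RowLeaf x i r l | i r l. i < length ps \<and> r \<in> ?H \<and> r ! i = 0 \<and> l < Suc i}
       \<subseteq> (\<lambda>(i,r,l). RowLeaf x i r l) ` (?I \<times> ?H \<times> {..<length ps})"
    proof
      fix v assume "v \<in> {RowLeaf x i r l | i r l. i < length ps \<and> r \<in> ?H \<and> r ! i = 0 \<and> l < Suc i}"
      then obtain i r l where "v = RowLeaf x i r l" "i < length ps" "r \<in> ?H" "l < Suc i" by blast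
      then show "v \<in> (\<lambda>(i,r,l). RowLeaf x i r l) ` (?I \<times> ?H \<times> {..<length ps})"
        by (auto simp: image_iff intro!: bexI[where x="(i,r,l)"])
    qed
    have 4: "{CycU x i r j | i r j. i < length ps \<and> r \<in> ?H \<and> r ! i = 0 \<and> ps ! i \<ge> 3 \<and> j < ps ! i}
       \<subseteq> (\<lambda>(i,r,j). CycU x i r j) ` (?I \<times> ?H \<times> ?J)"
    proof
      fix v assume "v \<in> {CycU x i r j | i r j. i < length ps \<and> r \<in> ?H \<and> r ! i = 0 \<and> ps ! i \<ge> 3 \<and> j < ps ! i}"
      then obtain i r j where "v = CycU x i r j" "i < length ps" "r \<in> ?H" "j < ps ! i" by blast
      moreover have "j < sum_list ps" using calculation by (meson elem_le_sum_list less_le_trans)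
      ultimately show "v \<in> (\<lambda>(i,r,j). CycU x i r j) ` (?I \<times> ?H \<times> ?J)"
        by (auto simp: image_iff intro!: bexI[where x="(i,r,j)"])
    qed
    have 5: "{CycV x i r j | i r j. i < length ps \<and> r \<in> ?H \<and> r ! i = 0 \<and> ps ! i \<ge> 3 \<and> j < ps ! i}
       \<subseteq> (\<lambda>(i,r,j). CycV x i r j) ` (?I \<times> ?H \<times> ?J)"
    proof
      fix v assume "v \<in> {CycV x i r j | i r j. i < length ps \<and> r \<in> ?H \<and> r ! i = 0 \<and> ps ! i \<ge> 3 \<and> j < ps ! i}"
      then obtain i r j where "v = CycV x i r j" "i < length ps" "r \<in> ?H" "j < ps ! i" by blast
      moreover have "j < sum_list ps" using calculation by (meson elem_le_sum_list less_le_trans)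
      ultimately show "v \<in> (\<lambda>(i,r,j). CycV x i r j) ` (?I \<times> ?H \<times> ?J)"
        by (auto simp: image_iff intro!: bexI[where x="(i,r,j)"])
    qed
    have f2: "finite {RowW x i r | i r. i < length ps \<and> r \<in> ?H \<and> r ! i = 0}"
      by (rule finite_subset[OF 2]) (simp add: fH)
    have f3: "finite {RowLeaf x i r l | i r l. i < length ps \<and> r \<in> ?H \<and> r ! i = 0 \<and> l < Suc i}"
      by (rule finite_subset[OF 3]) (simp add: fH)
    have f4: "finite {CycU x i r j | i r j. i < length ps \<and> r \<in> ?H \<and> r ! i = 0 \<and> ps ! i \<ge> 3 \<and> j < ps ! i}"
      by (rule finite_subset[OF 4]) (simp add: fH)
    have f5: "finite {CycV x i r j | i r j. i < length ps \<and> r \<in> ?H \<and> r ! i = 0 \<and> ps ! i \<ge> 3 \<and> j < ps ! i}"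
      by (rule finite_subset[OF 5]) (simp add: fH)
    show ?thesis unfolding gadget_vertices_def 1 using f2 f3 f4 f5 fH by simp
  qed
  moreover have "finite (constraint_vertices ps \<psi> c X)" for c X
  proof -
    have "constraint_vertices ps \<psi> c X \<subseteq> Con c ` Hpow ps (length (fst X))"
      by (auto simp: constraint_vertices_def)
    thus ?thesis using Hpow_finite finite_subset by blast
  qed
  ultimately show ?thesis by (simp add: graph_of_def)
qed

lemma E_finite: "instance_wf ps k n C \<Longrightarrow> finite (snd (graph_of ps n \<psi> C))"
  using E_sub V_finite by (meson finite_Pow_iff finite_subset)

lemma W_card: assumes wf: "instance_wf ps k n C" and c: "c < length C"
  shows "card (W ps \<psi> C c) = k * card \<psi>" "finite (W ps \<psi> C c)"
proof -
  let ?js = "fst (C!c)" and ?A = "{\<alpha> \<in> Hpow ps k. tadd ps \<alpha> (snd (C!c)) \<in> \<psi>}"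
  have kk: "length ?js = k" "distinct ?js" "snd (C!c) \<in> Hpow ps k" using wfD[OF wf c] by auto
  let ?f = "\<lambda>(\<alpha>, l). {Con c \<alpha>, Var (?js ! l) (\<alpha> ! l)}"
  have Weq: "W ps \<psi> C c = ?f ` (?A \<times> {..<k})"
    unfolding W_def using kk by (auto simp: cv_Con image_iff)
  have inj: "inj_on ?f (?A \<times> {..<k})"
  proof (rule inj_onI, clarsimp)
    fix a l a' l' assume "l < k" "l' < k" "{Con c a, Var (?js ! l) (a ! l)} = {Con c a', Var (?js ! l') (a' ! l')}"
    then have "a = a'" "?js ! l = ?js ! l'" by (auto simp: doubleton_eq_iff)
    then show "a = a' \<and> l = l'" using kk \<open>l < k\<close> \<open>l' < k\<close> by (simp add: nth_eq_iff_index_eq)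
  qed
  have fA: "finite ?A" using Hpow_finite by simp
  show "card (W ps \<psi> C c) = k * card \<psi>"
    using Weq card_image[OF inj] coset_card[OF kk(3)] by (simp add: card_cartesian_product)
  show "finite (W ps \<psi> C c)" using Weq fA by simp
qed

lemma W_sub: "c < length C \<Longrightarrow> W ps \<psi> C c \<subseteq> snd (graph_of ps n \<psi> C)"
  by (auto simp: E_eq)

lemma W_disj: assumes "c \<noteq> c'" shows "W ps \<psi> C c \<inter> W ps \<psi> C c' = {}"
proof (rule equals0I)
  fix g assume g: "g \<in> W ps \<psi> C c \<inter> W ps \<psi> C c'"
  obtain \<alpha> y b where 1: "g = {Con c \<alpha>, Var y b}" using g W_shape by (meson IntD1 IntD2)
  obtain \<alpha>' y' b' where 2: "g = {Con c' \<alpha>', Var y' b'}" using g W_shape by (meson IntD1 IntD2)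
  have "Con c \<alpha> \<in> g" using 1 by simp
  then show False using assms 2 by simp
qed

lemma W_U_disj: assumes "c \<in> G" shows "W ps \<psi> C c \<inter> U ps \<psi> C G = {}"
proof (rule equals0I)
  fix g assume g: "g \<in> W ps \<psi> C c \<inter> U ps \<psi> C G"
  obtain \<alpha> y b where 1: "g = {Con c \<alpha>, Var y b}" using g W_shape by (meson IntD1 IntD2)
  obtain c' \<alpha>' y' b' where 2: "c' \<notin> G" "g = {Con c' \<alpha>', Var y' b'}" using g U_shape by (meson IntD2)
  have "Con c \<alpha> \<in> g" using 1 by simp
  then show False using assms 2 by auto
qed

lemma U_card: assumes wf: "instance_wf ps k n C"
  shows "card (U ps \<psi> C G) \<le> card {c. c < length C \<and> c \<notin> G} * (k * card \<psi>)"
proof -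
  have "card (U ps \<psi> C G) \<le> (\<Sum>c\<in>{c. c < length C \<and> c \<notin> G}. card (W ps \<psi> C c))"
    unfolding U_def by (rule card_UN_le) simp
  also have "\<dots> = (\<Sum>c\<in>{c. c < length C \<and> c \<notin> G}. k * card \<psi>)"
    using W_card[OF wf] by (intro sum.cong) auto
  finally show ?thesis by simp
qed

lemma goodW_card: assumes wf: "instance_wf ps k n C" and G: "G \<subseteq> {..<length C}"
  shows "card (\<Union>c\<in>G. W ps \<psi> C c) = card G * (k * card \<psi>)"
proof -
  have fG: "finite G" using G finite_subset by blast
  have "card (\<Union>c\<in>G. W ps \<psi> C c) = (\<Sum>c\<in>G. card (W ps \<psi> C c))"
    using fG G W_card[OF wf] W_disj by (intro card_UN_disjoint) auto
  also have "\<dots> = (\<Sum>c\<in>G. k * card \<psi>)" using G W_card[OF wf] by (intro sum.cong) auto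
  finally show ?thesis by simp
qed

end



lemma ar: fixes P K Mx m s M e :: real
  assumes "P \<ge> K" "K \<ge> s*M" "Mx \<le> K + (m - s)*M" "Mx \<ge> P" "M > 0" "s \<le> m" "s \<ge> (1-e)*m" "s > 0"
  shows "P/Mx \<ge> 1-e"
proof -
  have sM: "s*M > 0" using assms by simp
  have Mx: "Mx > 0" using assms sM by linarith
  have "P/Mx \<ge> K/Mx" using assms Mx by (simp add: divide_right_mono)
  moreover have "K/Mx \<ge> 1 - e"
  proof (cases "1 - e \<le> 0")
    case True
    have "K \<ge> 0" using sM assms by linarith
    hence "K/Mx \<ge> 0" using Mx by simp
    then show ?thesis using True by linarith
  next
    case False
    have m: "m > 0" using assms by linarith
    have "e*m \<ge> 0" using assms(6,7) by (simp add: algebra_simps)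
    hence e0: "e \<ge> 0" using m by (simp add: zero_le_mult_iff)
    have "(1-e)*(m-s) \<le> e*s" using assms(7) by (simp add: algebra_simps)
    hence "(1-e)*(m-s)*M \<le> e*s*M" using assms by (simp add: mult_right_mono)
    also have "\<dots> \<le> e*K" using assms e0 by (metis mult.assoc mult_left_mono)
    finally have 1: "(1-e)*((m-s)*M) \<le> e*K" by (simp add: mult.assoc)
    have "(1-e)*Mx \<le> (1-e)*(K + (m - s)*M)" using False assms(3) by (simp add: mult_left_mono)
    also have "\<dots> = (1-e)*K + (1-e)*((m-s)*M)" by (simp add: distrib_left)
    also have "\<dots> \<le> K" using 1 by (simp add: algebra_simps)
    finally have "(1-e)*Mx \<le> K" .
    thus ?thesis using Mx by (simp add: pos_le_divide_eq mult.commute)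
  qed
  ultimately show ?thesis by linarith
qed

lemma hshift: assumes "pos ps" "a \<in> Hset ps" "b \<in> Hset ps" "s \<in> Hset ps"
  shows "hadd ps (hadd ps a b) (hneg ps (hadd ps s b)) = hadd ps a (hneg ps s)"
proof -
  have "hadd ps (hadd ps a b) (hneg ps (hadd ps s b)) = hadd ps (hadd ps a b) (hadd ps (hneg ps s) (hneg ps b))"
    using assms by (simp add: hneg_add)
  also have "\<dots> = hadd ps (hadd ps a (hneg ps s)) (hadd ps b (hneg ps b))"
    by (metis hadd_assoc hadd_comm)
  also have "\<dots> = hadd ps a (hneg ps s)" using assms by (simp add: hadd_neg hadd_zero hadd_Hset)
  finally show ?thesis .
qed

lemma GI_ge:
  assumes "bij_betw \<pi> (fst G1) (fst G2)" "finite (snd G1)"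
  shows "real (card {e \<in> snd G1. \<pi> ` e \<in> snd G2}) / real (max (card (snd G1)) (card (snd G2))) \<le> GI G1 G2"
proof -
  let ?r = "\<lambda>\<pi>. real (card {e \<in> snd G1. \<pi> ` e \<in> snd G2}) / real (max (card (snd G1)) (card (snd G2)))"
  have "?r ` {\<pi>. bij_betw \<pi> (fst G1) (fst G2)} \<subseteq> (\<lambda>a. real a / real (max (card (snd G1)) (card (snd G2)))) ` {..card (snd G1)}"
  proof
    fix y assume "y \<in> ?r ` {\<pi>. bij_betw \<pi> (fst G1) (fst G2)}"
    then obtain p where "y = ?r p" by blast
    moreover have "card {e \<in> snd G1. p ` e \<in> snd G2} \<le> card (snd G1)" using assms(2) by (simp add: card_mono)
    ultimately show "y \<in> (\<lambda>a. real a / real (max (card (snd G1)) (card (snd G2)))) ` {..card (snd G1)}" by auto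
  qed
  hence "finite (?r ` {\<pi>. bij_betw \<pi> (fst G1) (fst G2)})" by (rule finite_subset) simp
  thus ?thesis unfolding GI_def using assms(1) by (intro Max_ge) auto
qed

theorem lemma7p3:
  fixes ps :: "nat list" and k n :: nat and \<psi> :: "nat list list set"
    and C :: "constr list" and \<epsilon> :: real
  assumes "\<forall>i<length ps. ps ! i \<ge> 2"
    and "k \<ge> 3"
    and "bpi_subgroup ps k \<psi>"
    and "instance_wf ps k n C"
    and "csp_val ps n \<psi> C \<ge> 1 - \<epsilon>"
  shows "GI (graph_of ps n \<psi> C) (graph_of ps n \<psi> (zero_instance ps C)) \<ge> 1 - \<epsilon>"
proof -
  have pos: "pos ps" using assms(1) by (auto simp: pos_def)
  interpret grp ps k \<psi> using pos assms(3) by unfold_locales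
  have wf: "instance_wf ps k n C" by (rule assms(4))
  define m where "m = length C"
  define C0 where "C0 = zero_instance ps C"
  have lC0: "length C0 = m" by (simp add: C0_def m_def zero_instance_def)
  have C0c: "c < m \<Longrightarrow> C0 ! c = (fst (C!c), tzero ps k)" for c
    using wfD[OF wf, of c] by (auto simp: C0_def m_def zero_instance_def tzero_def split: prod.splits
          simp: map_replicate_const HpowD)
  have fsts: "map fst C = map fst C0"
    by (simp add: C0_def zero_instance_def case_prod_beta comp_def)
  have wf0: "instance_wf ps k n C0"
    unfolding instance_wf_def
  proof
    fix x assume "x \<in> set C0"
    then obtain i where i: "i < m" "x = C0 ! i" by (metis in_set_conv_nth lC0)
    show "length (fst x) = k \<and> distinct (fst x) \<and> set (fst x) \<subseteq> {..<n} \<and> snd x \<in> Hpow ps k"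
      using wfD[OF wf, of i] i tzero_Hpow by (simp add: C0c m_def)
  qed
  let ?P = "{..<n} \<rightarrow>\<^sub>E Hset ps"
  let ?F = "\<lambda>\<sigma>. real (card {i. i < length C \<and> satisfies ps \<psi> (C ! i) \<sigma>}) / real (length C)"
  have finP: "finite ?P" by (simp add: finite_PiE Hset_finite)
  have neP: "?P \<noteq> {}" using hzero_Hset[OF pos] by (auto simp: PiE_eq_empty_iff)
  have "csp_val ps n \<psi> C \<in> ?F ` ?P" unfolding csp_val_def using finP neP by (intro Max_in) auto
  then obtain \<sigma> where \<sigma>P: "\<sigma> \<in> ?P" and \<sigma>v: "?F \<sigma> = csp_val ps n \<psi> C" by auto
  have \<sigma>H: "x < n \<Longrightarrow> \<sigma> x \<in> Hset ps" for x using \<sigma>P by auto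
  define S where "S = {c. c < m \<and> satisfies ps \<psi> (C ! c) \<sigma>}"
  have Ssub: "S \<subseteq> {..<m}" by (auto simp: S_def)
  have Fval: "real (card S) / real m \<ge> 1 - \<epsilon>" using \<sigma>v assms(5) by (simp add: S_def m_def)
  define D where "D = (\<lambda>x. hneg ps (\<sigma> x))"
  define e where "e = (\<lambda>c. if c \<in> S then map D (fst (C!c)) else snd (C!c))"
  define D' where "D' = (\<lambda>x. hneg ps (D x))"
  define e' where "e' = (\<lambda>c. tneg ps (e c))"
  have DH: "D x \<in> Hset ps" for x by (simp add: D_def hneg_Hset pos)
  have D'H: "D' x \<in> Hset ps" for x by (simp add: D'_def hneg_Hset pos)
  have mapDH: "c < m \<Longrightarrow> map D (fst (C!c)) \<in> Hpow ps k" for c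
    using wfD[OF wf, of c] DH by (auto intro!: HpowI simp: m_def)
  have eH: "c < m \<Longrightarrow> e c \<in> Hpow ps k" for c
    using mapDH wfD[OF wf, of c] by (simp add: e_def m_def)
  have e'H: "c < m \<Longrightarrow> e' c \<in> Hpow ps k" for c
    using eH[of c] by (simp add: e'_def tneg_Hpow pos HpowD)
  interpret P1: pair ps k \<psi> n C C0 D e S
  proof (unfold_locales)
    show "instance_wf ps k n C" by (rule wf)
    show "instance_wf ps k n C0" by (rule wf0)
    show "map fst C = map fst C0" by (rule fsts)
    show "\<And>x. x < n \<Longrightarrow> D x \<in> Hset ps" by (rule DH)
    show "\<And>c. c < length C \<Longrightarrow> e c \<in> Hpow ps k" using eH by (simp add: m_def)
    show "\<And>c. c \<in> S \<Longrightarrow> c < length C \<Longrightarrow> e c = map D (fst (C ! c))" by (simp add: e_def)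
    fix c \<alpha> assume c: "c < length C" and a: "\<alpha> \<in> Hpow ps k" and in1: "tadd ps \<alpha> (snd (C ! c)) \<in> \<psi>"
    have k1: "length (fst (C!c)) = k" "snd (C!c) \<in> Hpow ps k" "set (fst (C!c)) \<subseteq> {..<n}" using wfD[OF wf c] by auto
    have "tadd ps \<alpha> (e c) \<in> \<psi>"
    proof (cases "c \<in> S")
      case True
      let ?s = "map \<sigma> (fst (C!c))" and ?as = "snd (C!c)"
      have sat: "tadd ps ?s ?as \<in> \<psi>" using True by (simp add: S_def satisfies_def)
      have "tadd ps (tadd ps \<alpha> ?as) (tneg ps (tadd ps ?s ?as)) = tadd ps \<alpha> (map D (fst (C!c)))"
      proof (rule nth_equalityI)
        show "length (tadd ps (tadd ps \<alpha> ?as) (tneg ps (tadd ps ?s ?as))) = length (tadd ps \<alpha> (map D (fst (C!c))))"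
          using k1 a by (simp add: HpowD)
        fix l assume l: "l < length (tadd ps (tadd ps \<alpha> ?as) (tneg ps (tadd ps ?s ?as)))"
        hence lk: "l < k" using k1 a by (simp add: HpowD)
        have xn: "fst (C!c) ! l < n" using k1 lk by (meson lessThan_iff nth_mem subsetD)
        show "tadd ps (tadd ps \<alpha> ?as) (tneg ps (tadd ps ?s ?as)) ! l = tadd ps \<alpha> (map D (fst (C!c))) ! l"
          using lk k1 a xn by (simp add: HpowD D_def hshift pos \<sigma>H)
      qed
      moreover have "tadd ps (tadd ps \<alpha> ?as) (tneg ps (tadd ps ?s ?as)) \<in> \<psi>"
        using in1 sat by (simp add: psi_add psi_neg)
      ultimately show ?thesis using True by (simp add: e_def)
    qed (simp add: e_def in1)
    moreover have "tadd ps \<alpha> (e c) \<in> Hpow ps k" using calculation psi_sub by blast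
    ultimately show "tadd ps (tadd ps \<alpha> (e c)) (snd (C0 ! c)) \<in> \<psi>"
      using c by (simp add: C0c m_def tadd_zero)
  qed
  interpret P2: pair ps k \<psi> n C0 C D' e' S
  proof (unfold_locales)
    show "instance_wf ps k n C0" by (rule wf0)
    show "instance_wf ps k n C" by (rule wf)
    show "map fst C0 = map fst C" by (rule fsts[symmetric])
    show "\<And>x. x < n \<Longrightarrow> D' x \<in> Hset ps" by (rule D'H)
    show "\<And>c. c < length C0 \<Longrightarrow> e' c \<in> Hpow ps k" using e'H by (simp add: lC0)
    show "\<And>c. c \<in> S \<Longrightarrow> c < length C0 \<Longrightarrow> e' c = map D' (fst (C0 ! c))"
      by (simp add: e'_def e_def D'_def tneg_def C0c lC0)
    fix c \<alpha> assume c: "c < length C0" and a: "\<alpha> \<in> Hpow ps k" and in1: "tadd ps \<alpha> (snd (C0 ! c)) \<in> \<psi>"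
    have cm: "c < m" using c lC0 by simp
    have k1: "length (fst (C!c)) = k" "snd (C!c) \<in> Hpow ps k" "set (fst (C!c)) \<subseteq> {..<n}" using wfD[OF wf] cm
      by (auto simp: m_def)
    have ain: "\<alpha> \<in> \<psi>" using in1 a cm by (simp add: C0c tadd_zero)
    have la: "length \<alpha> = k" using a HpowD by blast
    show "tadd ps (tadd ps \<alpha> (e' c)) (snd (C ! c)) \<in> \<psi>"
    proof (cases "c \<in> S")
      case True
      let ?s = "map \<sigma> (fst (C!c))" and ?as = "snd (C!c)"
      have sat: "tadd ps ?s ?as \<in> \<psi>" using True by (simp add: S_def satisfies_def)
      have "e' c = ?s"
      proof (rule nth_equalityI)
        show "length (e' c) = length ?s" by (simp add: e'_def e_def True)
        fix l assume "l < length (e' c)"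
        hence lk: "l < k" using k1 by (simp add: e'_def e_def True)
        have xn: "fst (C!c) ! l < n" using k1 lk by (meson lessThan_iff nth_mem subsetD)
        show "e' c ! l = ?s ! l" using lk k1 xn
          by (simp add: e'_def e_def True D_def hneg_neg pos \<sigma>H)
      qed
      hence "tadd ps (tadd ps \<alpha> (e' c)) ?as = tadd ps \<alpha> (tadd ps ?s ?as)"
        using la k1 by (simp add: tadd_assoc HpowD)
      then show ?thesis using ain sat psi_add by simp
    next
      case False
      have e'c: "e' c = tneg ps (snd (C!c))" by (simp add: e'_def e_def False)
      have "tadd ps (tadd ps \<alpha> (e' c)) (snd (C!c)) = tadd ps \<alpha> (tadd ps (tneg ps (snd (C!c))) (snd (C!c)))"
        using la k1 e'c by (simp add: tadd_assoc HpowD)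
      also have "\<dots> = \<alpha>" using k1 a
        by (simp add: tadd_comm[of "tneg ps (snd (C!c))"] tadd_negr tadd_zero HpowD)
      finally show ?thesis using ain by simp
    qed
  qed
  let ?V1 = "fst (graph_of ps n \<psi> C)" and ?V2 = "fst (graph_of ps n \<psi> C0)"
  let ?E1 = "snd (graph_of ps n \<psi> C)" and ?E2 = "snd (graph_of ps n \<psi> C0)"
  let ?\<pi> = "piv ps D e" and ?\<pi>' = "piv ps D' e'"
  have inv1: "v \<in> ?V1 \<Longrightarrow> ?\<pi>' (?\<pi> v) = v" for v
  proof (rule piv_inv[OF wf])
    show "\<And>x. x < n \<Longrightarrow> D x \<in> Hset ps \<and> D' x \<in> Hset ps \<and> hadd ps (D x) (D' x) = hzero ps"
      using DH D'H by (simp add: D'_def hadd_neg)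
    show "\<And>c. c < length C \<Longrightarrow> e c \<in> Hpow ps k \<and> e' c \<in> Hpow ps k \<and> tadd ps (e c) (e' c) = tzero ps k"
      using eH e'H by (simp add: e'_def tadd_negr m_def)
  qed
  have inv2: "v \<in> ?V2 \<Longrightarrow> ?\<pi> (?\<pi>' v) = v" for v
  proof (rule piv_inv[OF wf0])
    show "\<And>x. x < n \<Longrightarrow> D' x \<in> Hset ps \<and> D x \<in> Hset ps \<and> hadd ps (D' x) (D x) = hzero ps"
      using DH D'H by (simp add: D'_def hadd_neg hadd_comm[of ps "hneg ps _"])
    show "\<And>c. c < length C0 \<Longrightarrow> e' c \<in> Hpow ps k \<and> e c \<in> Hpow ps k \<and> tadd ps (e' c) (e c) = tzero ps k"
      using eH e'H by (simp add: e'_def tadd_negr lC0 tadd_comm[of "tneg ps _"] HpowD)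
  qed
  have bij: "bij_betw ?\<pi> ?V1 ?V2"
    by (rule bij_betw_byWitness[where f'="?\<pi>'"]) (use inv1 inv2 P1.vmap P2.vmap in auto)
  have bij2: "bij_betw ?\<pi>' ?V2 ?V1"
    by (rule bij_betw_byWitness[where f'="?\<pi>"]) (use inv1 inv2 P1.vmap P2.vmap in auto)
  have inj1: "inj_on ?\<pi> ?V1" using bij bij_betw_imp_inj_on by blast
  have inj2: "inj_on ?\<pi>' ?V2" using bij2 bij_betw_imp_inj_on by blast
  have fE1: "finite ?E1" using E_finite[OF wf] .
  have fE2: "finite ?E2" using E_finite[OF wf0] .
  let ?U1 = "U ps \<psi> C S" and ?U2 = "U ps \<psi> C0 S"
  let ?K1 = "?E1 - ?U1" and ?K2 = "?E2 - ?U2"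
  let ?pres = "{f \<in> ?E1. ?\<pi> ` f \<in> ?E2}"
  have Kpres: "?K1 \<subseteq> ?pres" using P1.emap[OF inj1] by blast
  have c_pres: "card ?K1 \<le> card ?pres" using Kpres fE1 by (intro card_mono) auto
  have c_K: "card ?K2 \<le> card ?K1"
  proof (rule card_inj_on_le[where f="image ?\<pi>'"])
    show "inj_on (image ?\<pi>') ?K2"
      using inj_on_image_Pow[OF inj2] E_sub[OF wf0] by (meson Diff_subset inj_on_subset subset_trans)
    show "image ?\<pi>' ` ?K2 \<subseteq> ?K1" using P2.emap[OF inj2] by blast
    show "finite ?K1" using fE1 by simp
  qed
  have c_E1: "card ?E1 \<le> card ?K1 + card ?U1"
  proof -
    have "card ?E1 \<le> card (?K1 \<union> (?E1 \<inter> ?U1))" by (rule card_mono) (use fE1 in auto)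
    also have "\<dots> \<le> card ?K1 + card (?E1 \<inter> ?U1)" by (rule card_Un_le)
    also have "card (?E1 \<inter> ?U1) \<le> card ?U1"
    proof -
      have "finite ?U1" unfolding U_def using W_card(2)[OF wf] by auto
      thus ?thesis by (intro card_mono) auto
    qed
    finally show ?thesis by simp
  qed
  have c_E2: "card ?E2 \<le> card ?K2 + card ?U2"
  proof -
    have "card ?E2 \<le> card (?K2 \<union> (?E2 \<inter> ?U2))" by (rule card_mono) (use fE2 in auto)
    also have "\<dots> \<le> card ?K2 + card (?E2 \<inter> ?U2)" by (rule card_Un_le)
    also have "card (?E2 \<inter> ?U2) \<le> card ?U2"
    proof -
      have "finite ?U2" unfolding U_def using W_card(2)[OF wf0] by auto
      thus ?thesis by (intro card_mono) auto
    qed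
    finally show ?thesis by simp
  qed
  have cbad: "card {c. c < m \<and> c \<notin> S} = m - card S"
  proof -
    have "{c. c < m \<and> c \<notin> S} = {..<m} - S" by auto
    thus ?thesis using Ssub by (simp add: card_Diff_subset finite_subset)
  qed
  have c_U1: "card ?U1 \<le> (m - card S) * (k * card \<psi>)"
    using U_card[OF wf, of S] cbad by (simp add: m_def)
  have c_U2: "card ?U2 \<le> (m - card S) * (k * card \<psi>)"
    using U_card[OF wf0, of S] cbad by (simp add: lC0)
  have c_K1: "card S * (k * card \<psi>) \<le> card ?K1"
  proof -
    have "(\<Union>c\<in>S. W ps \<psi> C c) \<subseteq> ?K1"
    proof
      fix f assume "f \<in> (\<Union>c\<in>S. W ps \<psi> C c)"
      then obtain c where c: "c \<in> S" "f \<in> W ps \<psi> C c" by blast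
      have "c < length C" using c Ssub by (auto simp: m_def)
      hence "f \<in> ?E1" using W_sub c(2) by blast
      moreover have "f \<notin> ?U1" using W_U_disj[of c S] c by blast
      ultimately show "f \<in> ?K1" by blast
    qed
    hence "card (\<Union>c\<in>S. W ps \<psi> C c) \<le> card ?K1" using fE1 by (intro card_mono) auto
    thus ?thesis using goodW_card[OF wf, of S] Ssub by (simp add: m_def)
  qed
  have qpos: "card \<psi> > 0" using psi_finite psi_zero card_gt_0_iff by blast
  have Mpos: "real (k * card \<psi>) > 0" using qpos assms(2) by simp
  have Sm: "card S \<le> m" using card_mono[OF finite_lessThan Ssub] by simp
  have ratio: "real (card ?pres) / real (max (card ?E1) (card ?E2)) \<ge> 1 - \<epsilon>"
  proof (cases "card S = 0")
    case True
    have "1 - \<epsilon> \<le> 0" using Fval True by simp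
    thus ?thesis by (smt (verit) divide_nonneg_nonneg of_nat_0_le_iff)
  next
    case False
    have mpos: "m > 0" using False Sm by linarith
    have sm: "real (card S) \<ge> (1 - \<epsilon>) * real m" using Fval mpos by (simp add: le_divide_eq)
    have pE: "card ?pres \<le> card ?E1" using fE1 by (intro card_mono) auto
    have mx: "max (card ?E1) (card ?E2) \<le> card ?K1 + (m - card S) * (k * card \<psi>)"
      using c_E1 c_E2 c_K c_U1 c_U2 by linarith
    have mx': "real (max (card ?E1) (card ?E2)) \<le> real (card ?K1) + (real m - real (card S)) * real (k * card \<psi>)"
      using mx Sm by (metis of_nat_add of_nat_diff of_nat_le_iff of_nat_mult)
    show ?thesis
    proof (rule ar[where K="real (card ?K1)" and m="real m" and s="real (card S)" and M="real (k * card \<psi>)"])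
      show "real (card ?K1) \<le> real (card ?pres)" using c_pres by simp
      show "real (card S) * real (k * card \<psi>) \<le> real (card ?K1)" using c_K1
        by (metis of_nat_le_iff of_nat_mult)
      show "real (max (card ?E1) (card ?E2)) \<le> real (card ?K1) + (real m - real (card S)) * real (k * card \<psi>)"
        by (rule mx')
      show "real (card ?pres) \<le> real (max (card ?E1) (card ?E2))" using pE by simp
      show "0 < real (k * card \<psi>)" by (rule Mpos)
      show "real (card S) \<le> real m" using Sm by simp
      show "(1 - \<epsilon>) * real m \<le> real (card S)" by (rule sm)
      show "0 < real (card S)" using False by simp
    qed
  qed
  have "real (card ?pres) / real (max (card ?E1) (card ?E2)) \<le> GI (graph_of ps n \<psi> C) (graph_of ps n \<psi> C0)"
    by (rule GI_ge[OF bij fE1])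
  with ratio show ?thesis by (simp add: C0_def)
qed


end
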